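(* Let $k\ge 3$, let $\sigma=\sigma_1\cdots\sigma_k\in\mathfrak S_k$ be a consecutive pattern, and let $1\text{-}\sigma$ denote the generalized pattern $1\text{-}(\sigma_1+1)(\sigma_2+1)\cdots(\sigma_k+1)$. Then $$\lim_{n\to\infty}\left(\frac{\alpha_n(1\text{-}\sigma)}{n!}\right)^{1/n}=\lim_{n\to\infty}\left(\frac{\alpha_n(\sigma)}{n!}\right)^{1/n},$$ and in particular the left-hand limit exists.
   Context: $\mathfrak S_n$ is the symmetric group on $\{1,\dots,n\}$, permutations in one-line notation. A generalized pattern of length $m$ is a permutation $\sigma_1\cdots\sigma_m\in\mathfrak S_m$ with, between each pair of adjacent entries, either a dash "-" or nothing. A permutation $\pi\in\mathfrak S_n$ contains it if there are indices $i_1<\dots<i_m$ with $i_{j+1}=i_j+1$ whenever there is no dash between $\sigma_j$ and $\sigma_{j+1}$, and with $\pi_{i_a}<\pi_{i_b}$ iff $\sigma_a<\sigma_b$ for all $a,b$; otherwise $\pi$ avoids it. A consecutive pattern has no dashes. $\alpha_n(\sigma)$ is the number of permutations in $\mathfrak S_n$ avoiding $\sigma$. *)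

theory Defs
  imports Complex_Main
begin

definition perms :: "nat \<Rightarrow> nat list set" where
  "perms n = {xs. length xs = n \<and> distinct xs \<and> set xs = {1..n}}"

text \<open>A generalized pattern is a permutation list sigma (of length m) together with
  a set D of dash positions: j \<in> D (0-based, j+1 < m) means there is a dash between
  the entries at positions j and j+1 (0-based); otherwise these entries must be
  adjacent in the text permutation.\<close>
definition contains_gp :: "nat list \<Rightarrow> nat set \<Rightarrow> nat list \<Rightarrow> bool" where
  "contains_gp \<sigma> D \<pi> \<longleftrightarrow>
    (\<exists>\<iota>::nat \<Rightarrow> nat.
       (\<forall>j. j + 1 < length \<sigma> \<longrightarrow> \<iota> j < \<iota> (j + 1)) \<and>
       (\<forall>j. j + 1 < length \<sigma> \<and> j \<notin> D \<longrightarrow> \<iota> (j + 1) = \<iota> j + 1) \<and>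
       (\<forall>j < length \<sigma>. \<iota> j < length \<pi>) \<and>
       (\<forall>a < length \<sigma>. \<forall>b < length \<sigma>.
           (\<pi> ! (\<iota> a) < \<pi> ! (\<iota> b)) \<longleftrightarrow> (\<sigma> ! a < \<sigma> ! b)))"

definition alpha :: "nat \<Rightarrow> nat list \<Rightarrow> nat set \<Rightarrow> nat" where
  "alpha n \<sigma> D = card {\<pi> \<in> perms n. \<not> contains_gp \<sigma> D \<pi>}"

text \<open>The generalized pattern 1-(sigma_1+1)...(sigma_k+1): a single dash after the first entry.\<close>
definition one_dash_pat :: "nat list \<Rightarrow> nat list" where
  "one_dash_pat \<sigma> = 1 # map Suc \<sigma>"

end

theory Submission
  imports Defs "HOL-Combinatorics.Multiset_Permutations"
begin


lemma perms_eq: "perms n = permutations_of_set {1..n}"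
  unfolding perms_def permutations_of_set_def using distinct_card by fastforce

lemma finite_perms: "finite (perms n)"
  unfolding perms_eq by simp

lemma card_perms: "card (perms n) = fact n"
  unfolding perms_eq by simp

lemma contains_order1:
  assumes "length xs = length ys"
    and "\<And>i j. i < length xs \<Longrightarrow> j < length xs \<Longrightarrow> (xs!i < xs!j \<longleftrightarrow> ys!i < ys!j)"
    and "contains_gp \<sigma> D xs"
  shows "contains_gp \<sigma> D ys"
proof -
  obtain \<iota> where i1: "\<forall>j. j + 1 < length \<sigma> \<longrightarrow> \<iota> j < \<iota> (j + 1)"
    and i2: "\<forall>j. j + 1 < length \<sigma> \<and> j \<notin> D \<longrightarrow> \<iota> (j + 1) = \<iota> j + 1"
    and i3: "\<forall>j < length \<sigma>. \<iota> j < length xs"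
    and i4: "\<forall>a < length \<sigma>. \<forall>b < length \<sigma>.
           (xs ! (\<iota> a) < xs ! (\<iota> b)) \<longleftrightarrow> (\<sigma> ! a < \<sigma> ! b)"
    using assms unfolding contains_gp_def by blast
  show ?thesis unfolding contains_gp_def
  proof (rule exI[of _ \<iota>], intro conjI allI impI)
    fix a b assume a: "a < length \<sigma>" and b: "b < length \<sigma>"
    show "(ys ! \<iota> a < ys ! \<iota> b) = (\<sigma> ! a < \<sigma> ! b)"
      using i4[rule_format, OF a b] assms(2)[of "\<iota> a" "\<iota> b"] i3 a b by auto
  qed (use i1 i2 i3 assms(1) in auto)
qed

lemma contains_order:
  assumes "length xs = length ys"
    and "\<And>i j. i < length xs \<Longrightarrow> j < length xs \<Longrightarrow> (xs!i < xs!j \<longleftrightarrow> ys!i < ys!j)"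
  shows "contains_gp \<sigma> D xs = contains_gp \<sigma> D ys"
  using contains_order1[of xs ys \<sigma> D] contains_order1[of ys xs \<sigma> D] assms by auto

lemma contains_take:
  assumes "contains_gp \<sigma> D (take m \<pi>)" shows "contains_gp \<sigma> D \<pi>"
proof -
  obtain \<iota> where i1: "\<forall>j. j + 1 < length \<sigma> \<longrightarrow> \<iota> j < \<iota> (j + 1)"
    and i2: "\<forall>j. j + 1 < length \<sigma> \<and> j \<notin> D \<longrightarrow> \<iota> (j + 1) = \<iota> j + 1"
    and i3: "\<forall>j < length \<sigma>. \<iota> j < length (take m \<pi>)"
    and i4: "\<forall>a < length \<sigma>. \<forall>b < length \<sigma>.
           ((take m \<pi>) ! (\<iota> a) < (take m \<pi>) ! (\<iota> b)) \<longleftrightarrow> (\<sigma> ! a < \<sigma> ! b)"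
    using assms unfolding contains_gp_def by blast
  show ?thesis unfolding contains_gp_def
    apply (rule exI[of _ \<iota>])
    using i1 i2 i3 i4 by auto
qed

lemma contains_drop:
  assumes "contains_gp \<sigma> D (drop m \<pi>)" shows "contains_gp \<sigma> D \<pi>"
proof -
  obtain \<iota> where i1: "\<forall>j. j + 1 < length \<sigma> \<longrightarrow> \<iota> j < \<iota> (j + 1)"
    and i2: "\<forall>j. j + 1 < length \<sigma> \<and> j \<notin> D \<longrightarrow> \<iota> (j + 1) = \<iota> j + 1"
    and i3: "\<forall>j < length \<sigma>. \<iota> j < length (drop m \<pi>)"
    and i4: "\<forall>a < length \<sigma>. \<forall>b < length \<sigma>.
           ((drop m \<pi>) ! (\<iota> a) < (drop m \<pi>) ! (\<iota> b)) \<longleftrightarrow> (\<sigma> ! a < \<sigma> ! b)"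
    using assms unfolding contains_gp_def by blast
  show ?thesis unfolding contains_gp_def
  proof (rule exI[of _ "\<lambda>j. m + \<iota> j"], intro conjI allI impI)
    fix a b assume a: "a < length \<sigma>" and b: "b < length \<sigma>"
    have "m \<le> length \<pi>" using i3 a by auto
    then show "(\<pi> ! (m + \<iota> a) < \<pi> ! (m + \<iota> b)) = (\<sigma> ! a < \<sigma> ! b)"
      using i4[rule_format, OF a b] by simp
  qed (use i1 i2 i3 in auto)
qed

lemma contains_one_dash:
  assumes "contains_gp (one_dash_pat \<sigma>) {0} \<pi>" shows "contains_gp \<sigma> {} \<pi>"
proof -
  obtain \<iota> where i1: "\<forall>j. j + 1 < length (one_dash_pat \<sigma>) \<longrightarrow> \<iota> j < \<iota> (j + 1)"
    and i2: "\<forall>j. j + 1 < length (one_dash_pat \<sigma>) \<and> j \<notin> {0} \<longrightarrow> \<iota> (j + 1) = \<iota> j + 1"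
    and i3: "\<forall>j < length (one_dash_pat \<sigma>). \<iota> j < length \<pi>"
    and i4: "\<forall>a < length (one_dash_pat \<sigma>). \<forall>b < length (one_dash_pat \<sigma>).
           (\<pi> ! (\<iota> a) < \<pi> ! (\<iota> b)) \<longleftrightarrow> (one_dash_pat \<sigma> ! a < one_dash_pat \<sigma> ! b)"
    using assms unfolding contains_gp_def by blast
  show ?thesis unfolding contains_gp_def
  proof (rule exI[of _ "\<lambda>j. \<iota> (Suc j)"], intro conjI allI impI)
    fix j assume "j + 1 < length \<sigma>"
    then show "\<iota> (Suc j) < \<iota> (Suc (j+1))"
      using i1 unfolding one_dash_pat_def by auto
  next
    fix j assume "j + 1 < length \<sigma> \<and> j \<notin> {}"
    then show "\<iota> (Suc (j + 1)) = \<iota> (Suc j) + 1"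
      using i2[rule_format, of "Suc j"] unfolding one_dash_pat_def by auto
  next
    fix j assume "j < length \<sigma>" then show "\<iota> (Suc j) < length \<pi>"
      using i3 unfolding one_dash_pat_def by auto
  next
    fix a b assume "a < length \<sigma>" "b < length \<sigma>"
    then show "(\<pi> ! \<iota> (Suc a) < \<pi> ! \<iota> (Suc b)) = (\<sigma> ! a < \<sigma> ! b)"
      using i4[rule_format, of "Suc a" "Suc b"] unfolding one_dash_pat_def by auto
  qed
qed

lemma contains_one_dash_back:
  assumes "contains_gp \<sigma> {} (drop (Suc p) \<pi>)" and "p < length \<pi>" and "\<pi> ! p = 1"
    and "\<forall>i<length \<pi>. i \<noteq> p \<longrightarrow> \<pi> ! i \<ge> 2"
    and "\<forall>x\<in>set \<sigma>. x \<ge> 1"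
  shows "contains_gp (one_dash_pat \<sigma>) {0} \<pi>"
proof -
  obtain \<iota> where i1: "\<forall>j. j + 1 < length \<sigma> \<longrightarrow> \<iota> j < \<iota> (j + 1)"
    and i2: "\<forall>j. j + 1 < length \<sigma> \<and> j \<notin> {} \<longrightarrow> \<iota> (j + 1) = \<iota> j + 1"
    and i3: "\<forall>j < length \<sigma>. \<iota> j < length (drop (Suc p) \<pi>)"
    and i4: "\<forall>a < length \<sigma>. \<forall>b < length \<sigma>.
           ((drop (Suc p) \<pi>) ! (\<iota> a) < (drop (Suc p) \<pi>) ! (\<iota> b)) \<longleftrightarrow> (\<sigma> ! a < \<sigma> ! b)"
    using assms unfolding contains_gp_def by blast
  define \<kappa> where "\<kappa> = (\<lambda>j. if j = 0 then p else Suc p + \<iota> (j - 1))"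
  have big: "\<pi> ! (Suc p + \<iota> j) \<ge> 2" if "j < length \<sigma>" for j
    using assms(4) i3 that by auto
  have sbig: "(1 # map Suc \<sigma>) ! Suc j \<ge> 2" if "j < length \<sigma>" for j
    using assms(5) that by (auto simp: nth_mem)
  show ?thesis unfolding contains_gp_def
  proof (rule exI[of _ \<kappa>], intro conjI allI impI)
    fix j assume "j + 1 < length (one_dash_pat \<sigma>)"
    then show "\<kappa> j < \<kappa> (j+1)" using i1 unfolding one_dash_pat_def \<kappa>_def
      by (cases j) auto
  next
    fix j assume "j + 1 < length (one_dash_pat \<sigma>) \<and> j \<notin> {0}"
    then show "\<kappa> (j+1) = \<kappa> j + 1" using i2 unfolding one_dash_pat_def \<kappa>_def
      by (cases j) auto
  next
    fix j assume "j < length (one_dash_pat \<sigma>)"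
    then show "\<kappa> j < length \<pi>" using i3 assms(2) unfolding one_dash_pat_def \<kappa>_def
      by (cases j) auto
  next
    fix a b assume a: "a < length (one_dash_pat \<sigma>)" and b: "b < length (one_dash_pat \<sigma>)"
    show "(\<pi> ! \<kappa> a < \<pi> ! \<kappa> b) = (one_dash_pat \<sigma> ! a < one_dash_pat \<sigma> ! b)"
    proof (cases a)
      case 0
      then show ?thesis
      proof (cases b)
        case 0 then show ?thesis using \<open>a = 0\<close> by simp
      next
        case (Suc b')
        then show ?thesis using \<open>a = 0\<close> b big[of b'] sbig[of b'] assms(3)
          unfolding one_dash_pat_def \<kappa>_def by auto
      qed
    next
      case (Suc a')
      then show ?thesis
      proof (cases b)
        case 0 then show ?thesis using Suc a big[of a'] sbig[of a'] assms(3)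
          unfolding one_dash_pat_def \<kappa>_def by auto
      next
        case (Suc b')
        then show ?thesis using \<open>a = Suc a'\<close> a b i4[rule_format, of a' b'] i3 assms(2)
          unfolding one_dash_pat_def \<kappa>_def by auto
      qed
    qed
  qed
qed

definition rk :: "nat set \<Rightarrow> nat \<Rightarrow> nat" where
  "rk S x = card {y\<in>S. y \<le> x}"

definition std :: "nat list \<Rightarrow> nat list" where
  "std xs = map (rk (set xs)) xs"

lemma rk_mono:
  assumes "finite S" "x \<in> S" "y \<in> S" "x < y" shows "rk S x < rk S y"
  unfolding rk_def
proof (rule psubset_card_mono)
  show "finite {z \<in> S. z \<le> y}" using assms by simp
  have "y \<in> {z \<in> S. z \<le> y}" "y \<notin> {z \<in> S. z \<le> x}" using assms by auto
  moreover have "{z \<in> S. z \<le> x} \<subseteq> {z \<in> S. z \<le> y}" using assms by auto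
  ultimately show "{z \<in> S. z \<le> x} \<subset> {z \<in> S. z \<le> y}" by blast
qed

lemma rk_less_iff:
  assumes "finite S" "x \<in> S" "y \<in> S" shows "rk S x < rk S y \<longleftrightarrow> x < y"
  using rk_mono[OF assms(1) assms(2,3)] rk_mono[OF assms(1) assms(3,2)]
  by (cases x y rule: linorder_cases) auto

lemma rk_inj: "finite S \<Longrightarrow> inj_on (rk S) S"
  unfolding inj_on_def
proof (intro ballI impI)
  fix x y assume "finite S" "x \<in> S" "y \<in> S" "rk S x = rk S y"
  then show "x = y" using rk_less_iff[of S x y] rk_less_iff[of S y x]
    by (cases x y rule: linorder_cases) auto
qed

lemma rk_range:
  assumes "finite S" "x \<in> S" shows "rk S x \<in> {1..card S}"
proof -
  have "{y\<in>S. y \<le> x} \<noteq> {}" using assms by auto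
  then have "card {y\<in>S. y \<le> x} \<ge> 1" using assms
    by (simp add: Suc_leI card_gt_0_iff)
  moreover have "card {y\<in>S. y \<le> x} \<le> card S" using assms by (intro card_mono) auto
  ultimately show ?thesis unfolding rk_def by auto
qed

lemma std_perm:
  assumes "distinct xs" shows "std xs \<in> perms (length xs)"
proof -
  let ?S = "set xs"
  have inj: "inj_on (rk ?S) ?S" by (rule rk_inj) simp
  have d: "distinct (std xs)" unfolding std_def using assms inj by (simp add: distinct_map)
  have sub: "set (std xs) \<subseteq> {1..length xs}"
    unfolding std_def using rk_range[of ?S] distinct_card[OF assms] by auto
  have "card (set (std xs)) = length xs"
    using distinct_card[OF d] unfolding std_def by simp
  then have "set (std xs) = {1..length xs}"
    using sub by (intro card_subset_eq) auto
  then show ?thesis unfolding perms_def std_def using d by (auto simp: std_def)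
qed

lemma std_order:
  assumes "i < length xs" "j < length xs"
  shows "(std xs ! i < std xs ! j) = (xs ! i < xs ! j)"
  unfolding std_def using assms rk_less_iff[of "set xs" "xs!i" "xs!j"] by (simp add: nth_mem)

lemma std_contains: "contains_gp \<sigma> D (std xs) = contains_gp \<sigma> D xs"
proof (rule contains_order)
  show l: "length (std xs) = length xs" by (simp add: std_def)
  fix i j assume "i < length (std xs)" "j < length (std xs)"
  then show "(std xs ! i < std xs ! j) = (xs ! i < xs ! j)" using std_order l by simp
qed

lemma std_inj:
  assumes "set xs = set ys" "std xs = std ys"
  shows "xs = ys"
proof (rule nth_equalityI)
  have l: "length xs = length ys" using assms(2) unfolding std_def by (metis length_map)
  then show "length xs = length ys" .
  fix i assume i: "i < length xs"
  have "rk (set xs) (xs!i) = rk (set xs) (ys!i)"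
    using assms i l unfolding std_def by (metis nth_map)
  then show "xs ! i = ys ! i"
    using rk_inj[of "set xs"] i l assms(1) by (metis finite_set inj_on_def nth_mem)
qed

definition Av :: "nat list \<Rightarrow> nat set \<Rightarrow> nat \<Rightarrow> nat list set" where
  "Av \<sigma> D n = {\<pi> \<in> perms n. \<not> contains_gp \<sigma> D \<pi>}"

lemma finite_Av: "finite (Av \<sigma> D n)"
  unfolding Av_def using finite_perms by simp

lemma card_Av_le: "card (Av \<sigma> D n) \<le> fact n"
  unfolding Av_def card_perms[symmetric] by (rule card_mono[OF finite_perms]) auto

lemma set_drop_distinct:
  assumes "distinct \<pi>" shows "set (drop m \<pi>) = set \<pi> - set (take m \<pi>)"
proof -
  have "distinct (take m \<pi> @ drop m \<pi>)" using assms by simp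
  then have "set (take m \<pi>) \<inter> set (drop m \<pi>) = {}" by (simp only: distinct_append)
  moreover have "set \<pi> = set (take m \<pi>) \<union> set (drop m \<pi>)"
    by (metis append_take_drop_id set_append)
  ultimately show ?thesis by blast
qed

lemma count1:
  "card (Av \<sigma> D (m+n)) \<le> (m+n choose m) * card (Av \<sigma> D m) * card (Av \<sigma> D n)"
proof -
  define T where "T = {S. S \<subseteq> {1..m+n} \<and> card S = m}"
  define f where "f = (\<lambda>\<pi>::nat list. (set (take m \<pi>), std (take m \<pi>), std (drop m \<pi>)))"
  have img: "f ` Av \<sigma> D (m+n) \<subseteq> T \<times> Av \<sigma> D m \<times> Av \<sigma> D n"
  proof
    fix y assume "y \<in> f ` Av \<sigma> D (m+n)"
    then obtain \<pi> where \<pi>: "\<pi> \<in> Av \<sigma> D (m+n)" and y: "y = f \<pi>" by auto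
    have l: "length \<pi> = m + n" and d: "distinct \<pi>" and s: "set \<pi> = {1..m+n}"
      and nc: "\<not> contains_gp \<sigma> D \<pi>"
      using \<pi> unfolding Av_def perms_def by auto
    have "set (take m \<pi>) \<subseteq> {1..m+n}" using s set_take_subset by metis
    moreover have "card (set (take m \<pi>)) = m"
      using distinct_card[of "take m \<pi>"] d l by simp
    ultimately have "set (take m \<pi>) \<in> T" unfolding T_def by simp
    moreover have "std (take m \<pi>) \<in> Av \<sigma> D m"
      using std_perm[of "take m \<pi>"] d l nc contains_take[of \<sigma> D m \<pi>]
      unfolding Av_def by (auto simp: std_contains)
    moreover have "std (drop m \<pi>) \<in> Av \<sigma> D n"
      using std_perm[of "drop m \<pi>"] d l nc contains_drop[of \<sigma> D m \<pi>]
      unfolding Av_def by (auto simp: std_contains)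
    ultimately show "y \<in> T \<times> Av \<sigma> D m \<times> Av \<sigma> D n" unfolding y f_def by simp
  qed
  have inj: "inj_on f (Av \<sigma> D (m+n))"
  proof (rule inj_onI)
    fix \<pi>1 \<pi>2 assume p1: "\<pi>1 \<in> Av \<sigma> D (m+n)" and p2: "\<pi>2 \<in> Av \<sigma> D (m+n)"
      and e: "f \<pi>1 = f \<pi>2"
    have d1: "distinct \<pi>1" "set \<pi>1 = {1..m+n}" using p1 unfolding Av_def perms_def by auto
    have d2: "distinct \<pi>2" "set \<pi>2 = {1..m+n}" using p2 unfolding Av_def perms_def by auto
    have st: "set (take m \<pi>1) = set (take m \<pi>2)" using e unfolding f_def by simp
    have t: "take m \<pi>1 = take m \<pi>2"
      using std_inj[OF st] e unfolding f_def by simp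
    have "set (drop m \<pi>1) = set (drop m \<pi>2)"
      using set_drop_distinct[OF d1(1)] set_drop_distinct[OF d2(1)] d1 d2 st by simp
    then have "drop m \<pi>1 = drop m \<pi>2"
      using std_inj e unfolding f_def by simp
    then show "\<pi>1 = \<pi>2" using t by (metis append_take_drop_id)
  qed
  have "card (Av \<sigma> D (m+n)) \<le> card (T \<times> Av \<sigma> D m \<times> Av \<sigma> D n)"
    by (rule card_inj_on_le[OF inj img]) (auto simp: T_def finite_Av)
  also have "\<dots> = card T * (card (Av \<sigma> D m) * card (Av \<sigma> D n))"
    by (simp add: card_cartesian_product)
  also have "card T = (m+n choose m)" unfolding T_def using n_subsets[of "{1..m+n}" m] by simp
  finally show ?thesis by (simp add: mult.assoc)
qed

lemma count2_piece:
  assumes "p < n" and "\<forall>x\<in>set \<sigma>. x \<ge> 1"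
  shows "card {\<pi> \<in> Av (one_dash_pat \<sigma>) {0} n. \<pi> ! p = 1}
     \<le> (n - 1 choose p) * card (Av (one_dash_pat \<sigma>) {0} p) * card (Av \<sigma> {} (n - 1 - p))"
proof -
  define P where "P = one_dash_pat \<sigma>"
  define X where "X = {\<pi> \<in> Av P {0} n. \<pi> ! p = 1}"
  define T where "T = {S. S \<subseteq> {2..n} \<and> card S = p}"
  define f where "f = (\<lambda>\<pi>::nat list. (set (take p \<pi>), std (take p \<pi>), std (drop (Suc p) \<pi>)))"
  have basic: "length \<pi> = n" "distinct \<pi>" "set \<pi> = {1..n}" "\<pi> ! p = 1"
    "\<not> contains_gp P {0} \<pi>" "\<forall>i<length \<pi>. i \<noteq> p \<longrightarrow> \<pi> ! i \<ge> 2"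
    "set (take (Suc p) \<pi>) = insert 1 (set (take p \<pi>))"
    if "\<pi> \<in> X" for \<pi>
  proof -
    show l: "length \<pi> = n" and d: "distinct \<pi>" and s: "set \<pi> = {1..n}" and o: "\<pi> ! p = 1"
      and "\<not> contains_gp P {0} \<pi>"
      using that unfolding X_def Av_def perms_def by auto
    show "\<forall>i<length \<pi>. i \<noteq> p \<longrightarrow> \<pi> ! i \<ge> 2"
    proof (intro allI impI)
      fix i assume i: "i < length \<pi>" "i \<noteq> p"
      have "\<pi> ! i \<noteq> \<pi> ! p" using d i l assms(1) nth_eq_iff_index_eq by metis
      moreover have "\<pi> ! i \<in> {1..n}" using s i nth_mem by metis
      ultimately show "\<pi> ! i \<ge> 2" using o by auto
    qed
    show "set (take (Suc p) \<pi>) = insert 1 (set (take p \<pi>))"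
      using take_Suc_conv_app_nth[of p \<pi>] l assms(1) o by simp
  qed
  have img: "f ` X \<subseteq> T \<times> Av P {0} p \<times> Av \<sigma> {} (n - 1 - p)"
  proof
    fix y assume "y \<in> f ` X"
    then obtain \<pi> where \<pi>: "\<pi> \<in> X" and y: "y = f \<pi>" by auto
    note b = basic[OF \<pi>]
    have "set (take p \<pi>) \<subseteq> {2..n}"
    proof
      fix x assume "x \<in> set (take p \<pi>)"
      then obtain i where i: "i < p" "x = \<pi> ! i" using b(1) assms(1)
        by (auto simp: in_set_conv_nth)
      then show "x \<in> {2..n}" using b(6) b(3) b(1) assms(1) nth_mem[of i \<pi>] by auto
    qed
    moreover have "card (set (take p \<pi>)) = p"
      using distinct_card[of "take p \<pi>"] b(1,2) assms(1) by simp
    ultimately have "set (take p \<pi>) \<in> T" unfolding T_def by simp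
    moreover have "std (take p \<pi>) \<in> Av P {0} p"
      using std_perm[of "take p \<pi>"] b(1,2,5) assms(1) contains_take[of P "{0}" p \<pi>]
      unfolding Av_def by (auto simp: std_contains)
    moreover have "std (drop (Suc p) \<pi>) \<in> Av \<sigma> {} (n - 1 - p)"
      using std_perm[of "drop (Suc p) \<pi>"] b assms
        contains_one_dash_back[of \<sigma> p \<pi>]
      unfolding Av_def P_def by (auto simp: std_contains)
    ultimately show "y \<in> T \<times> Av P {0} p \<times> Av \<sigma> {} (n - 1 - p)" unfolding y f_def by simp
  qed
  have inj: "inj_on f X"
  proof (rule inj_onI)
    fix \<pi>1 \<pi>2 assume p1: "\<pi>1 \<in> X" and p2: "\<pi>2 \<in> X" and e: "f \<pi>1 = f \<pi>2"
    note b1 = basic[OF p1] and b2 = basic[OF p2]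
    have st: "set (take p \<pi>1) = set (take p \<pi>2)" using e unfolding f_def by simp
    have t: "take p \<pi>1 = take p \<pi>2"
      using std_inj[OF st] e unfolding f_def by simp
    have t2: "take (Suc p) \<pi>1 = take (Suc p) \<pi>2"
      using t b1(1,4) b2(1,4) assms(1) take_Suc_conv_app_nth by metis
    have "set (drop (Suc p) \<pi>1) = set (drop (Suc p) \<pi>2)"
      using set_drop_distinct[OF b1(2)] set_drop_distinct[OF b2(2)] b1(3) b2(3) t2 by simp
    then have "drop (Suc p) \<pi>1 = drop (Suc p) \<pi>2"
      using std_inj e unfolding f_def by simp
    then show "\<pi>1 = \<pi>2" using t2 by (metis append_take_drop_id)
  qed
  have "card X \<le> card (T \<times> Av P {0} p \<times> Av \<sigma> {} (n - 1 - p))"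
    by (rule card_inj_on_le[OF inj img]) (auto simp: T_def finite_Av)
  also have "\<dots> = card T * (card (Av P {0} p) * card (Av \<sigma> {} (n - 1 - p)))"
    by (simp add: card_cartesian_product)
  also have "card T = (n - 1 choose p)" unfolding T_def using n_subsets[of "{2..n}" p] by simp
  finally show ?thesis unfolding X_def P_def by (simp add: mult.assoc)
qed

lemma count2:
  assumes "n \<ge> 1" and "\<forall>x\<in>set \<sigma>. x \<ge> 1"
  shows "card (Av (one_dash_pat \<sigma>) {0} n)
     \<le> (\<Sum>p<n. (n - 1 choose p) * card (Av (one_dash_pat \<sigma>) {0} p) * card (Av \<sigma> {} (n - 1 - p)))"
proof -
  have sub: "Av (one_dash_pat \<sigma>) {0} n \<subseteq> (\<Union>p\<in>{..<n}. {\<pi> \<in> Av (one_dash_pat \<sigma>) {0} n. \<pi> ! p = 1})"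
  proof
    fix \<pi> assume \<pi>: "\<pi> \<in> Av (one_dash_pat \<sigma>) {0} n"
    then have "1 \<in> set \<pi>" "length \<pi> = n" using assms(1) unfolding Av_def perms_def by auto
    then obtain p where "p < n" "\<pi> ! p = 1" by (auto simp: in_set_conv_nth)
    then show "\<pi> \<in> (\<Union>p\<in>{..<n}. {\<pi> \<in> Av (one_dash_pat \<sigma>) {0} n. \<pi> ! p = 1})" using \<pi> by auto
  qed
  have "card (Av (one_dash_pat \<sigma>) {0} n)
     \<le> card (\<Union>p\<in>{..<n}. {\<pi> \<in> Av (one_dash_pat \<sigma>) {0} n. \<pi> ! p = 1})"
    by (rule card_mono[OF _ sub]) (auto simp: finite_Av)
  also have "\<dots> \<le> (\<Sum>p<n. card {\<pi> \<in> Av (one_dash_pat \<sigma>) {0} n. \<pi> ! p = 1})"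
    by (rule card_UN_le) simp
  also have "\<dots> \<le> (\<Sum>p<n. (n - 1 choose p) * card (Av (one_dash_pat \<sigma>) {0} p) * card (Av \<sigma> {} (n - 1 - p)))"
    by (rule sum_mono) (use count2_piece assms in auto)
  finally show ?thesis .
qed



lemma sum_binom_aux: "(\<Sum>p<Suc k. ((p+c) choose c)) = (Suc (c+k) choose k)"
proof -
  have "(\<Sum>p<Suc k. ((p+c) choose c)) = (\<Sum>p\<le>k. ((c+p) choose p))"
    unfolding lessThan_Suc_atMost
  proof (intro sum.cong refl)
    fix p show "(p + c choose c) = (c + p choose p)"
      using binomial_symmetric[of c "p+c"] by (simp add: add.commute)
  qed
  also have "\<dots> = (Suc (c+k) choose k)" by (rule sum_choose_lower)
  finally show ?thesis .
qed

lemma binom_ineq: "c * (Suc (c+k) choose k) \<le> Suc k * ((Suc k + c) choose c)"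
proof -
  have e1: "Suc k * (Suc (c+k) choose Suc k) = Suc (c+k) * ((c+k) choose k)"
    by (rule Suc_times_binomial)
  have e2: "(Suc (c+k) - k) * (Suc (c+k) choose k) = Suc (c+k) * ((Suc (c+k) - 1) choose k)"
    by (rule binomial_absorb_comp)
  have e3: "(Suc (c+k) choose Suc k) = ((Suc k + c) choose c)"
    using binomial_symmetric[of "Suc k" "Suc (c+k)"] by (simp add: add.commute)
  have "c * (Suc (c+k) choose k) \<le> Suc c * (Suc (c+k) choose k)" by simp
  also have "\<dots> = Suc k * ((Suc k + c) choose c)"
    using e1 e2 e3 by (simp add: Suc_diff_le)
  finally show ?thesis .
qed

lemma root_binom_lim: "(\<lambda>n. root n (real ((n+c) choose c))) \<longlonglongrightarrow> 1"
proof -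
  have l1: "(\<lambda>n. root n (real n) * root n (1 + real c)) \<longlonglongrightarrow> 1"
    using tendsto_mult[OF LIMSEQ_root LIMSEQ_root_const[of "1 + real c"]] by simp
  have l2: "(\<lambda>n. root n (real n + real c)) \<longlonglongrightarrow> 1"
  proof (rule tendsto_sandwich[OF _ _ tendsto_const l1])
    show "eventually (\<lambda>n. 1 \<le> root n (real n + real c)) sequentially"
    proof (rule eventually_sequentiallyI[of 1])
      fix n :: nat assume n: "1 \<le> n"
      have "root n 1 \<le> root n (real n + real c)" using n by (intro real_root_le_mono) auto
      then show "1 \<le> root n (real n + real c)" using n by simp
    qed
    show "eventually (\<lambda>n. root n (real n + real c) \<le> root n (real n) * root n (1 + real c)) sequentially"
    proof (rule eventually_sequentiallyI[of 1])
      fix n :: nat assume n: "1 \<le> n"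
      have "root n (real n + real c) \<le> root n (real n * (1 + real c))"
      proof (intro real_root_le_mono)
        have "real c * 1 \<le> real c * real n" using n by (intro mult_left_mono) auto
        then show "real n + real c \<le> real n * (1 + real c)" by (simp add: algebra_simps)
      qed (use n in auto)
      also have "\<dots> = root n (real n) * root n (1 + real c)" by (simp add: real_root_mult)
      finally show "root n (real n + real c) \<le> root n (real n) * root n (1 + real c)" .
    qed
  qed
  have l3: "(\<lambda>n. root n (real n + real c) ^ c) \<longlonglongrightarrow> 1"
    using tendsto_power[OF l2, of c] by simp
  show ?thesis
  proof (rule tendsto_sandwich[OF _ _ tendsto_const l3])
    show "eventually (\<lambda>n. 1 \<le> root n (real ((n+c) choose c))) sequentially"
    proof (rule eventually_sequentiallyI[of 1])
      fix n :: nat assume n: "1 \<le> n"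
      have "(n+c) choose c \<ge> 1" by (simp add: Suc_leI)
      then have "root n 1 \<le> root n (real ((n+c) choose c))" using n by (intro real_root_le_mono) auto
      then show "1 \<le> root n (real ((n+c) choose c))" using n by simp
    qed
    show "eventually (\<lambda>n. root n (real ((n+c) choose c)) \<le> root n (real n + real c) ^ c) sequentially"
    proof (rule eventually_sequentiallyI[of 1])
      fix n :: nat assume n: "1 \<le> n"
      have "(n+c) choose c \<le> (n+c)^c" by (rule binomial_le_pow) simp
      then have "real ((n+c) choose c) \<le> (real n + real c)^c"
        by (metis of_nat_add of_nat_le_iff of_nat_power)
      then have "root n (real ((n+c) choose c)) \<le> root n ((real n + real c)^c)"
        using n by (intro real_root_le_mono) auto
      also have "\<dots> = root n (real n + real c) ^ c" using n by (simp add: real_root_power)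
      finally show "root n (real ((n+c) choose c)) \<le> root n (real n + real c) ^ c" .
    qed
  qed
qed

lemma conv:
  fixes x :: "nat \<Rightarrow> real" and L :: real
  assumes L0: "L \<ge> 0" and low: "\<And>n. n \<ge> 1 \<Longrightarrow> L \<le> root n (x n)"
    and up: "\<And>r. r > L \<Longrightarrow> \<exists>c. \<forall>n. x n \<le> real ((n+c) choose c) * r^n"
  shows "(\<lambda>n. root n (x n)) \<longlonglongrightarrow> L"
proof (rule order_tendstoI)
  fix y assume "y < L"
  then show "eventually (\<lambda>n. y < root n (x n)) sequentially"
    using low by (intro eventually_sequentiallyI[of 1]) (auto intro: less_le_trans)
next
  fix y assume y: "L < y"
  define r where "r = (L + y)/2"
  have r: "L < r" "r < y" "r > 0" using y L0 by (auto simp: r_def)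
  obtain c where c: "\<forall>n. x n \<le> real ((n+c) choose c) * r^n" using up r by blast
  have "(\<lambda>n. root n (real ((n+c) choose c)) * r) \<longlonglongrightarrow> 1 * r"
    by (intro tendsto_mult root_binom_lim tendsto_const)
  then have ev: "eventually (\<lambda>n. root n (real ((n+c) choose c)) * r < y) sequentially"
    using r by (intro order_tendstoD) auto
  have ev2: "eventually (\<lambda>n. root n (x n) \<le> root n (real ((n+c) choose c)) * r) sequentially"
  proof (intro eventually_sequentiallyI[of 1])
    fix n::nat assume n: "1 \<le> n"
    have "root n (x n) \<le> root n (real ((n+c) choose c) * r^n)"
      using c n by (intro real_root_le_mono) auto
    also have "\<dots> = root n (real ((n+c) choose c)) * r"
      using r n by (simp add: real_root_mult real_root_power_cancel)
    finally show "root n (x n) \<le> root n (real ((n+c) choose c)) * r" .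
  qed
  show "eventually (\<lambda>n. root n (x n) < y) sequentially"
    using ev ev2 by eventually_elim auto
qed

lemma abstract:
  fixes a b :: "nat \<Rightarrow> real"
  assumes a0: "\<And>n. 0 \<le> a n" and ab: "\<And>n. a n \<le> b n" and b1: "\<And>n. b n \<le> 1"
    and sub: "\<And>m n. a (m+n) \<le> a m * a n"
    and rec: "\<And>n. n \<ge> 1 \<Longrightarrow> real n * b n \<le> (\<Sum>p<n. b p * a (n-1-p))"
  shows "\<exists>L. (\<lambda>n. root n (b n)) \<longlonglongrightarrow> L \<and> (\<lambda>n. root n (a n)) \<longlonglongrightarrow> L"
proof -
  define R where "R = (\<lambda>m. root m (a m)) ` {1..}"
  define L where "L = Inf R"
  have Rne: "R \<noteq> {}" unfolding R_def by auto
  have bdd: "bdd_below R" unfolding R_def bdd_below_def using a0 real_root_ge_zero by blast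
  have a1: "a n \<le> 1" for n using ab[of n] b1[of n] by linarith
  have b0: "0 \<le> b n" for n using ab[of n] a0[of n] by linarith
  have lowa: "L \<le> root n (a n)" if "n \<ge> 1" for n
    unfolding L_def using bdd that by (intro cInf_lower) (auto simp: R_def)
  have L0: "L \<ge> 0" unfolding L_def using Rne
    by (intro cInf_greatest) (auto simp: R_def a0 real_root_ge_zero)
  have lowb: "L \<le> root n (b n)" if "n \<ge> 1" for n
  proof -
    have "root n (a n) \<le> root n (b n)" using ab[of n] that by (intro real_root_le_mono) auto
    then show ?thesis using lowa[OF that] by linarith
  qed
  have subpow: "a (q*m + s) \<le> a m ^ q * a s" for q m s
  proof (induction q)
    case 0 then show ?case by simp
  next
    case (Suc q)
    have "a (Suc q * m + s) = a (m + (q*m + s))" by (simp add: add.assoc)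
    also have "\<dots> \<le> a m * a (q*m+s)" by (rule sub)
    also have "\<dots> \<le> a m * (a m ^ q * a s)" using Suc a0 by (intro mult_left_mono) auto
    finally show ?case by (simp add: mult.assoc)
  qed
  have apow: "a n \<le> a m ^ (n div m)" if "m \<ge> 1" for m n
  proof -
    have "a n = a ((n div m)*m + n mod m)" by simp
    also have "\<dots> \<le> a m ^ (n div m) * a (n mod m)" by (rule subpow)
    also have "\<dots> \<le> a m ^ (n div m)" using a1 a0 by (intro mult_left_le) auto
    finally show ?thesis .
  qed
  have keyA: "\<exists>C. \<forall>n. a n \<le> C * r^n" if r: "r > L" for r
  proof -
    have rpos: "r > 0" using r L0 by simp
    obtain t where "t \<in> R" "t < r" using cInf_lessD[OF Rne] r unfolding L_def by blast
    then obtain m where m: "m \<ge> 1" and t: "t = root m (a m)" and tr: "t < r"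
      unfolding R_def by auto
    show ?thesis
    proof (cases "a m = 0")
      case True
      show ?thesis
      proof (intro exI allI)
        fix n
        show "a n \<le> (1 + (1/r)^m) * r^n"
        proof (cases "m \<le> n")
          case True
          then have "n div m \<ge> 1" using m by (simp add: Suc_le_eq div_greater_zero_iff)
          then have "a n \<le> 0" using apow[OF m, of n] \<open>a m = 0\<close> by (simp add: power_0_left)
          moreover have "0 \<le> (1 + (1/r)^m) * r^n" using rpos by simp
          ultimately show ?thesis by linarith
        next
          case False
          have "1 \<le> (1 + (1/r)^m) * r^n"
          proof (cases "r \<ge> 1")
            case True
            then have "1 \<le> r^n" by (rule one_le_power)
            moreover have "r^n \<le> (1 + (1/r)^m) * r^n" using rpos by (simp add: algebra_simps)
            ultimately show ?thesis by linarith
          next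
            case False
            have "(1/r)^n \<le> (1/r)^m" using False rpos \<open>\<not> m \<le> n\<close>
              by (intro power_increasing) auto
            then have "(1/r)^n * r^n \<le> (1/r)^m * r^n"
              by (rule mult_right_mono) (use rpos in simp)
            moreover have "(1/r)^n * r^n = 1" using rpos by (simp add: power_divide)
            moreover have "(1/r)^m * r^n \<le> (1 + (1/r)^m) * r^n" using rpos by (simp add: algebra_simps)
            ultimately show ?thesis by linarith
          qed
          then show ?thesis using a1[of n] by linarith
        qed
      qed
    next
      case False
      then have amp: "a m > 0" using a0[of m] by simp
      have t0: "0 \<le> t" unfolding t using a0 real_root_ge_zero by blast
      have t1: "t \<le> 1" unfolding t using a1[of m] real_root_le_mono[of m "a m" 1] m by simp
      have amt: "a m = t ^ m" unfolding t using m a0 by simp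
      show ?thesis
      proof (intro exI allI)
        fix n
        define q where "q = n div m"
        have nq: "n \<le> m * (q + 1)"
        proof -
          have "n = m * q + n mod m" unfolding q_def by simp
          moreover have "n mod m < m" using m by simp
          ultimately show ?thesis by (simp add: algebra_simps)
        qed
        have "a n * a m \<le> a m ^ q * a m" using apow[OF m, of n] amp unfolding q_def
          by (intro mult_right_mono) auto
        also have "\<dots> = t ^ (m * (q + 1))" unfolding amt by (simp add: power_mult[symmetric] algebra_simps power_add)
        also have "\<dots> \<le> t ^ n" using t0 t1 nq by (intro power_decreasing) auto
        also have "\<dots> \<le> r ^ n" using t0 tr by (intro power_mono) auto
        finally have "a n * a m \<le> r ^ n" .
        then show "a n \<le> (1 / a m) * r ^ n" using amp by (simp add: field_simps)
      qed
    qed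
  qed
  have keyB: "\<exists>c. \<forall>n. b n \<le> real ((n+c) choose c) * r^n" if r: "r > L" for r
  proof -
    have rpos: "r > 0" using r L0 by simp
    obtain C where C: "\<And>n. a n \<le> C * r^n" using keyA[OF r] by blast
    define c where "c = nat \<lceil>C / r\<rceil>"
    have "C / r \<le> real c" unfolding c_def by linarith
    then have cr: "C \<le> real c * r" using rpos by (simp add: field_simps)
    have "b n \<le> real ((n+c) choose c) * r^n" for n
    proof (induction n rule: less_induct)
      case (less n)
      show ?case
      proof (cases n)
        case 0 then show ?thesis using b1[of 0] by simp
      next
        case (Suc k)
        have "real n * b n \<le> (\<Sum>p<n. b p * a (n-1-p))" by (rule rec) (simp add: Suc)
        also have "\<dots> \<le> (\<Sum>p<n. (real ((p+c) choose c) * r^p) * (C * r^(k-p)))"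
        proof (rule sum_mono)
          fix p assume p: "p \<in> {..<n}"
          have "0 \<le> C * r^(k-p)" using C[of "k-p"] a0[of "k-p"] by linarith
          then show "b p * a (n-1-p) \<le> (real ((p+c) choose c) * r^p) * (C * r^(k-p))"
            using less.IH[of p] p b0 C[of "k-p"] Suc a0[of "k-p"] rpos by (intro mult_mono) auto
        qed
        also have "\<dots> = (\<Sum>p<n. C * r^k * real ((p+c) choose c))"
        proof (rule sum.cong[OF refl])
          fix p assume p: "p \<in> {..<n}"
          then have "r^p * r^(k-p) = r^k" using Suc by (simp add: power_add[symmetric])
          then show "(real ((p+c) choose c) * r^p) * (C * r^(k-p)) = C * r^k * real ((p+c) choose c)"
            by (metis (no_types, lifting) mult.assoc mult.commute mult.left_commute)
        qed
        also have "\<dots> = C * r^k * real (Suc (c+k) choose k)"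
          unfolding sum_distrib_left[symmetric] of_nat_sum[symmetric] Suc sum_binom_aux ..
        also have "\<dots> \<le> (real c * r) * r^k * real (Suc (c+k) choose k)"
          using cr rpos by (intro mult_right_mono) auto
        also have "\<dots> = r^n * real (c * (Suc (c+k) choose k))" using Suc by (simp add: algebra_simps)
        also have "\<dots> \<le> r^n * real (Suc k * ((Suc k + c) choose c))"
        proof (rule mult_left_mono)
          show "real (c * (Suc (c+k) choose k)) \<le> real (Suc k * ((Suc k + c) choose c))"
            by (simp only: of_nat_le_iff binom_ineq)
        qed (use rpos in simp)
        also have "\<dots> = real n * (real ((n+c) choose c) * r^n)" using Suc by (simp add: algebra_simps)
        finally show ?thesis using Suc by (simp add: mult_le_cancel_left_pos)
      qed
    qed
    then show ?thesis by blast
  qed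
  have cb: "(\<lambda>n. root n (b n)) \<longlonglongrightarrow> L"
    by (rule conv[OF L0 lowb keyB]) auto
  have ca: "(\<lambda>n. root n (a n)) \<longlonglongrightarrow> L"
  proof (rule conv[OF L0 lowa])
    fix r assume "r > L"
    then obtain c where "\<forall>n. b n \<le> real ((n+c) choose c) * r^n" using keyB by blast
    then show "\<exists>c. \<forall>n. a n \<le> real ((n+c) choose c) * r^n" using ab by (meson order_trans)
  qed auto
  show ?thesis using ca cb by blast
qed


lemma fact_split: "(fact (m+n)::real) = real (m+n choose m) * fact m * fact n"
proof -
  have "fact m * fact (m + n - m) * (m+n choose m) = (fact (m+n)::nat)"
    by (rule binomial_fact_lemma) simp
  then have "real (fact m * fact n * (m+n choose m)) = real (fact (m+n))" by simp
  then show ?thesis by (simp only: of_nat_mult of_nat_fact) (simp add: algebra_simps)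
qed

theorem mainTheorem4:
  fixes k :: nat and \<sigma> :: "nat list"
  assumes "k \<ge> 3" and "\<sigma> \<in> perms k"
  shows "\<exists>L::real.
     (\<lambda>n. root n (real (alpha n (one_dash_pat \<sigma>) {0}) / fact n)) \<longlonglongrightarrow> L \<and>
     (\<lambda>n. root n (real (alpha n \<sigma> {}) / fact n)) \<longlonglongrightarrow> L"
proof -
  define P where "P = one_dash_pat \<sigma>"
  define a where "a = (\<lambda>n. real (card (Av \<sigma> {} n)) / fact n)"
  define b where "b = (\<lambda>n. real (card (Av P {0} n)) / fact n)"
  have pos: "\<forall>x\<in>set \<sigma>. x \<ge> 1" using assms(2) unfolding perms_def by auto
  have "\<exists>L. (\<lambda>n. root n (b n)) \<longlonglongrightarrow> L \<and> (\<lambda>n. root n (a n)) \<longlonglongrightarrow> L"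
  proof (rule abstract)
    fix n
    show "0 \<le> a n" unfolding a_def by simp
    have "Av \<sigma> {} n \<subseteq> Av P {0} n" unfolding Av_def P_def using contains_one_dash by auto
    then have "card (Av \<sigma> {} n) \<le> card (Av P {0} n)" by (intro card_mono finite_Av)
    then show "a n \<le> b n" unfolding a_def b_def by (intro divide_right_mono) auto
    have "real (card (Av P {0} n)) \<le> real (fact n)"
      using card_Av_le[of P "{0}" n] by (simp only: of_nat_le_iff)
    then have "real (card (Av P {0} n)) \<le> fact n" by simp
    then show "b n \<le> 1" unfolding b_def by simp
  next
    fix m n
    have c: "real (card (Av \<sigma> {} (m+n))) \<le> real (m+n choose m) * real (card (Av \<sigma> {} m)) * real (card (Av \<sigma> {} n))"
    proof -
      have "real (card (Av \<sigma> {} (m+n))) \<le> real ((m+n choose m) * card (Av \<sigma> {} m) * card (Av \<sigma> {} n))"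
        using count1[of \<sigma> "{}" m n] by (simp only: of_nat_le_iff)
      then show ?thesis by (simp only: of_nat_mult)
    qed
    have "a (m+n) \<le> real (m+n choose m) * real (card (Av \<sigma> {} m)) * real (card (Av \<sigma> {} n)) / fact (m+n)"
      unfolding a_def by (rule divide_right_mono[OF c]) simp
    also have "\<dots> = a m * a n" unfolding a_def fact_split by (simp add: field_simps)
    finally show "a (m+n) \<le> a m * a n" .
  next
    fix n :: nat assume n: "n \<ge> 1"
    have c: "real (card (Av P {0} n)) \<le> (\<Sum>p<n. real (n - 1 choose p) * real (card (Av P {0} p)) * real (card (Av \<sigma> {} (n - 1 - p))))"
    proof -
      have "real (card (Av P {0} n)) \<le> real (\<Sum>p<n. (n - 1 choose p) * card (Av P {0} p) * card (Av \<sigma> {} (n - 1 - p)))"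
        using count2[OF n pos] unfolding P_def by (simp only: of_nat_le_iff)
      then show ?thesis by (simp only: of_nat_mult of_nat_sum)
    qed
    have fn: "(fact n :: real) = real n * fact (n - 1)" using n by (simp add: fact_reduce)
    have "real n * b n = real (card (Av P {0} n)) / fact (n-1)"
      unfolding b_def fn using n by (simp add: field_simps)
    also have "\<dots> \<le> (\<Sum>p<n. real (n - 1 choose p) * real (card (Av P {0} p)) * real (card (Av \<sigma> {} (n - 1 - p)))) / fact (n-1)"
      by (rule divide_right_mono[OF c]) simp
    also have "\<dots> = (\<Sum>p<n. b p * a (n-1-p))"
      unfolding sum_divide_distrib
    proof (rule sum.cong[OF refl])
      fix p assume "p \<in> {..<n}"
      then have p: "p \<le> n - 1" using n by simp
      have eq: "(fact (n-1)::real) = real (n - 1 choose p) * fact p * fact (n-1-p)"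
      proof -
        have e: "p + (n-1-p) = n-1" using p by simp
        show ?thesis using fact_split[of p "n-1-p"] unfolding e .
      qed
      have bp: "real (n - 1 choose p) > 0" using p by simp
      then show "real (n - 1 choose p) * real (card (Av P {0} p)) * real (card (Av \<sigma> {} (n - 1 - p))) / fact (n - 1) = b p * a (n - 1 - p)"
        unfolding a_def b_def eq using bp by (simp add: field_simps)
    qed
    finally show "real n * b n \<le> (\<Sum>p<n. b p * a (n-1-p))" .
  qed
  then show ?thesis unfolding a_def b_def P_def alpha_def Av_def .
qed



end
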